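(* Let $0<\delta<1/10$. Any one-way (Alice to Bob) communication protocol for the $\mathsf{Overwrite}$ problem that errs with probability at most $\delta$ over inputs drawn from $\mathcal{D}_{\mathsf{Overwrite}}$ has communication complexity $\Omega(n)$ with respect to $\mathcal{D}_{\mathsf{Overwrite}}$.
   Context: In $\mathsf{Overwrite}$, Alice gets $X^A\in\{0,1,*\}^n$ and Bob gets $X^B\in\{0,1\}^n$ and an index $i^*\in[n]$, with the promise that for every $i\ne i^*$ either $X^A_i=X^B_i$ or $X^A_i=*$. Alice sends one message to Bob, who must output $X^A_{i^*}$; if $X^A_{i^*}=*$ both outputs $0$ and $1$ are correct. The distribution $\mathcal{D}_{\mathsf{Overwrite}}$: choose $i^*$ uniformly from $[n]$ and $X^B$ uniformly from $\{0,1\}^n$; set $X^A_{i^*}$ to $*$ with probability $1/2$, to $0$ with probability $1/4$ and to $1$ with probability $1/4$; independently for each $i\ne i^*$, set $X^A_i=*$ with probability $1/2$ and $X^A_i=X^B_i$ with probability $1/2$. Communication complexity with respect to a distribution is the expected message length (in bits) on inputs drawn from it. *)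

theory Defs
  imports "HOL-Probability.Probability"
begin

text \<open>Alice's symbols in {0,1,*}: None = *, Some False = 0, Some True = 1.
  Indices [n] are represented by {0..<n}; inputs are functions on nat that take a
  default value outside {0..<n}.\<close>

type_synonym alice_input = "nat \<Rightarrow> bool option"
type_synonym bob_input = "nat \<Rightarrow> bool"

definition star_coord_pmf :: "bool option pmf" where
  "star_coord_pmf = do { s \<leftarrow> bernoulli_pmf (1/2);
                          if s then return_pmf None else map_pmf Some (bernoulli_pmf (1/2)) }"

definition other_coord_pmf :: "bool \<Rightarrow> bool option pmf" where
  "other_coord_pmf b = map_pmf (\<lambda>s. if s then None else Some b) (bernoulli_pmf (1/2))"

definition D_overwrite :: "nat \<Rightarrow> (alice_input \<times> bob_input \<times> nat) pmf" where
  "D_overwrite n = do {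
     i \<leftarrow> pmf_of_set {..<n};
     xb \<leftarrow> Pi_pmf {..<n} False (\<lambda>_. bernoulli_pmf (1/2));
     xa \<leftarrow> Pi_pmf {..<n} None (\<lambda>j. if j = i then star_coord_pmf else other_coord_pmf (xb j));
     return_pmf (xa, xb, i) }"

definition ow_correct :: "alice_input \<Rightarrow> nat \<Rightarrow> bool \<Rightarrow> bool" where
  "ow_correct xa i out \<longleftrightarrow> (xa i = None \<or> xa i = Some out)"

text \<open>A one-way public-coin protocol: shared randomness r drawn from R (a discrete
  distribution on nat), Alice's message alice r xa (a bit string), Bob's output
  bob r msg xb i.  Deterministic protocols are the case R = return_pmf 0.\<close>
definition ow_error ::
  "nat \<Rightarrow> nat pmf \<Rightarrow> (nat \<Rightarrow> alice_input \<Rightarrow> bool list)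
     \<Rightarrow> (nat \<Rightarrow> bool list \<Rightarrow> bob_input \<Rightarrow> nat \<Rightarrow> bool) \<Rightarrow> real" where
  "ow_error n R alice bob =
     measure_pmf.prob (pair_pmf R (D_overwrite n))
       {(r, xa, xb, i). \<not> ow_correct xa i (bob r (alice r xa) xb i)}"

definition ow_cost ::
  "nat \<Rightarrow> nat pmf \<Rightarrow> (nat \<Rightarrow> alice_input \<Rightarrow> bool list) \<Rightarrow> ennreal" where
  "ow_cost n R alice =
     (\<integral>\<^sup>+ x. ennreal (real (length (alice (fst x) (fst (snd x)))))
        \<partial>measure_pmf (pair_pmf R (D_overwrite n)))"

end

theory Submission
  imports Defs
begin

lemma exp_ofbool_eq: "measure_pmf.expectation M (\<lambda>x. of_bool (x = y)) = pmf M y"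
proof -
  have "(\<lambda>x. of_bool (x = y)) = (\<lambda>x. indicator {y} x :: real)" by (auto simp: indicator_def)
  thus ?thesis by (simp add: measure_pmf_single)
qed

lemma coord_eq:
  "bernoulli_pmf (1/2) \<bind> (\<lambda>b. (if j = i then star_coord_pmf else other_coord_pmf b) \<bind> (\<lambda>a. return_pmf (b,a))) =
   bernoulli_pmf (1/2) \<bind> (\<lambda>u. bernoulli_pmf (1/2) \<bind> (\<lambda>v. bernoulli_pmf (1/2) \<bind> (\<lambda>w.
     return_pmf (if j = i then w else v, if u then None else Some v))))"
(is "?l = ?r")
proof (rule pmf_eqI)
  fix x :: "bool \<times> bool option"
  obtain a b where x: "x = (a,b)" by fastforce
  show "pmf ?l x = pmf ?r x"
    unfolding x
    by (cases a; cases b; cases "j = i")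
       (auto simp: other_coord_pmf_def star_coord_pmf_def map_pmf_def o_def pmf_bind bind_assoc_pmf bind_return_pmf
         bind_return_pmf' indicator_def exp_ofbool_eq)
qed

definition FT :: "nat \<Rightarrow> (nat \<Rightarrow> bool) set" where "FT n = PiE_dflt {..<n} True (\<lambda>_. UNIV)"
definition FF :: "nat \<Rightarrow> (nat \<Rightarrow> bool) set" where "FF n = PiE_dflt {..<n} False (\<lambda>_. UNIV)"
definition Smask :: "(nat \<Rightarrow> bool) \<Rightarrow> (nat \<Rightarrow> bool) \<Rightarrow> nat \<Rightarrow> bool option" where
  "Smask u v = (\<lambda>j. if u j then None else Some (v j))"
definition Phi :: "nat \<times> (nat \<Rightarrow> bool) \<times> (nat \<Rightarrow> bool) \<times> (nat \<Rightarrow> bool) \<Rightarrow> alice_input \<times> bob_input \<times> nat" where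
  "Phi = (\<lambda>(i,u,v,w). (Smask u v, v(i := w i), i))"
definition Omega :: "nat \<Rightarrow> (nat \<times> (nat \<Rightarrow> bool) \<times> (nat \<Rightarrow> bool) \<times> (nat \<Rightarrow> bool)) set" where
  "Omega n = {..<n} \<times> FT n \<times> FF n \<times> FF n"

lemma set_Pi_mem: "finite A \<Longrightarrow> f \<in> set_pmf (Pi_pmf A d p) \<Longrightarrow> x \<notin> A \<Longrightarrow> f x = d"
  using set_Pi_pmf_subset[of A d p] by blast

lemma pmf_of_set_times:
  assumes "finite A" "A \<noteq> {}" "finite B" "B \<noteq> {}"
  shows "pmf_of_set (A \<times> B) = pair_pmf (pmf_of_set A) (pmf_of_set B)"
  by (rule pmf_eqI) (auto simp: assms pmf_pair card_cartesian_product indicator_def)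

lemma Pi_bern_eq: "Pi_pmf {..<n::nat} d (\<lambda>_. bernoulli_pmf (1/2)) = pmf_of_set (PiE_dflt {..<n} d (\<lambda>_. UNIV))"
  unfolding bernoulli_pmf_half_conv_pmf_of_set by (subst Pi_pmf_of_set) auto

lemma finite_FT: "finite (FT n)" and finite_FF: "finite (FF n)"
  by (auto simp: FT_def FF_def intro!: finite_PiE_dflt)

lemma card_FT: "card (FT n) = 2^n" and card_FF: "card (FF n) = 2^n"
  by (simp_all add: FT_def FF_def card_PiE_dflt)

lemma FT_ne: "FT n \<noteq> {}" and FF_ne: "FF n \<noteq> {}"
  using card_FT[of n] card_FF[of n] by auto

lemma D_eq:
  assumes n: "n > 0"
  shows "D_overwrite n = map_pmf Phi (pmf_of_set (Omega n))"
proof -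
  let ?A = "{..<n}"
  let ?b = "bernoulli_pmf (1/2)"
  define K :: "nat \<Rightarrow> nat \<Rightarrow> bool \<Rightarrow> bool option pmf" where "K = (\<lambda>i j b. if j = i then star_coord_pmf else other_coord_pmf b)"
  have inner: "Pi_pmf ?A False (\<lambda>_. ?b) \<bind> (\<lambda>xb. Pi_pmf ?A None (\<lambda>j. K i j (xb j)) \<bind> (\<lambda>xa. return_pmf (xa, xb, i)))
     = Pi_pmf ?A True (\<lambda>_. ?b) \<bind> (\<lambda>U. Pi_pmf ?A False (\<lambda>_. ?b) \<bind> (\<lambda>V. Pi_pmf ?A False (\<lambda>_. ?b) \<bind> (\<lambda>W.
          return_pmf (Phi (i,U,V,W)))))" if i: "i \<in> ?A" for i
  proof -
    define H where "H = (\<lambda>h::nat \<Rightarrow> bool \<times> bool option. (\<lambda>j. snd (h j), \<lambda>j. fst (h j), i))"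
    have "Pi_pmf ?A (False,None) (\<lambda>j. ?b \<bind> (\<lambda>b. K i j b \<bind> (\<lambda>a. return_pmf (b,a))))
        = Pi_pmf ?A False (\<lambda>_. ?b) \<bind> (\<lambda>f. Pi_pmf ?A None (\<lambda>j. K i j (f j)) \<bind> (\<lambda>g.
             return_pmf (\<lambda>j. if j \<in> ?A then (f j, g j) else (False, None))))"
      by (simp add: Pi_pmf_bind[where d'=False] Pi_pmf_bind[where d'=None])
    note eq0 = this
    have 1: "map_pmf H (Pi_pmf ?A (False,None) (\<lambda>j. ?b \<bind> (\<lambda>b. K i j b \<bind> (\<lambda>a. return_pmf (b,a)))))
        = Pi_pmf ?A False (\<lambda>_. ?b) \<bind> (\<lambda>xb. Pi_pmf ?A None (\<lambda>j. K i j (xb j)) \<bind> (\<lambda>xa. return_pmf (xa, xb, i)))"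
      unfolding eq0
      apply (simp add: map_bind_pmf)
      apply (intro bind_pmf_cong refl)
      apply (auto simp: H_def fun_eq_iff dest: set_Pi_mem[rotated])
      done
    have 2: "Pi_pmf ?A (False,None) (\<lambda>j. ?b \<bind> (\<lambda>b. K i j b \<bind> (\<lambda>a. return_pmf (b,a))))
       = Pi_pmf ?A (False,None) (\<lambda>j. ?b \<bind> (\<lambda>u. ?b \<bind> (\<lambda>v. ?b \<bind> (\<lambda>w.
          return_pmf (if j = i then w else v, if u then None else Some v)))))"
      unfolding K_def by (simp only: coord_eq)
    also have "\<dots> = Pi_pmf ?A True (\<lambda>_. ?b) \<bind> (\<lambda>U. Pi_pmf ?A False (\<lambda>_. ?b) \<bind> (\<lambda>V. Pi_pmf ?A False (\<lambda>_. ?b) \<bind> (\<lambda>W.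
          return_pmf (\<lambda>j. if j \<in> ?A then (if j = i then W j else V j, if U j then None else Some (V j)) else (False, None)))))"
      by (subst Pi_pmf_bind[where d'=True], simp) (simp add: Pi_pmf_bind[where d'=False])
    finally have 3: "map_pmf H (Pi_pmf ?A (False,None) (\<lambda>j. ?b \<bind> (\<lambda>b. K i j b \<bind> (\<lambda>a. return_pmf (b,a))))) =
       Pi_pmf ?A True (\<lambda>_. ?b) \<bind> (\<lambda>U. Pi_pmf ?A False (\<lambda>_. ?b) \<bind> (\<lambda>V. Pi_pmf ?A False (\<lambda>_. ?b) \<bind> (\<lambda>W.
          return_pmf (Phi (i,U,V,W)))))"
      apply (simp add: map_bind_pmf)
      apply (intro bind_pmf_cong refl)
      using i apply (auto simp: H_def fun_eq_iff Phi_def Smask_def dest: set_Pi_mem[rotated])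
      done
    show ?thesis using 1 3 by simp
  qed
  have "D_overwrite n = pmf_of_set ?A \<bind> (\<lambda>i. Pi_pmf ?A True (\<lambda>_. ?b) \<bind> (\<lambda>U. Pi_pmf ?A False (\<lambda>_. ?b) \<bind> (\<lambda>V. Pi_pmf ?A False (\<lambda>_. ?b) \<bind> (\<lambda>W.
          return_pmf (Phi (i,U,V,W))))))"
    unfolding D_overwrite_def K_def[symmetric]
    apply (rule bind_pmf_cong[OF refl])
    using n by (intro inner[unfolded K_def]) (subst (asm) set_pmf_of_set, auto)
  also have "\<dots> = map_pmf Phi (pmf_of_set (Omega n))"
    using n lessThan_empty_iff[of n]
    by (simp add: Omega_def pmf_of_set_times finite_FT finite_FF FT_ne FF_ne Pi_bern_eq FT_def[symmetric] FF_def[symmetric]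
        pair_pmf_def map_bind_pmf bind_assoc_pmf bind_return_pmf)
  finally show ?thesis .
qed

definition Fd :: "nat \<Rightarrow> bool \<Rightarrow> (nat \<Rightarrow> bool) set" where "Fd n d = PiE_dflt {..<n} d (\<lambda>_. UNIV)"

lemma FT_Fd: "FT n = Fd n True" and FF_Fd: "FF n = Fd n False"
  by (simp_all add: FT_def FF_def Fd_def)

lemma finite_Fd: "finite (Fd n d)" by (auto simp: Fd_def intro!: finite_PiE_dflt)
lemma card_Fd: "card (Fd n d) = 2^n" by (simp add: Fd_def card_PiE_dflt)
lemma mem_Fd: "v \<in> Fd n d \<longleftrightarrow> (\<forall>j. j \<ge> n \<longrightarrow> v j = d)"
  by (auto simp: Fd_def PiE_dflt_def not_less)

lemma flip_count:
  assumes i: "i < n" and h: "\<And>v b. h (v(i:=b)) = h v"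
  shows "card {v\<in>Fd n d. h v = v i} * 2 = 2^n"
proof -
  define \<sigma> where "\<sigma> = (\<lambda>v::nat\<Rightarrow>bool. v(i := \<not> v i))"
  let ?S1 = "{v\<in>Fd n d. h v = v i}" and ?S2 = "{v\<in>Fd n d. h v \<noteq> v i}"
  have inv: "\<sigma> (\<sigma> v) = v" for v by (auto simp: \<sigma>_def fun_eq_iff)
  have inj: "inj_on \<sigma> ?S1"
  proof (rule inj_onI)
    fix x y assume "\<sigma> x = \<sigma> y"
    hence "\<sigma> (\<sigma> x) = \<sigma> (\<sigma> y)" by simp
    thus "x = y" by (simp only: inv)
  qed
  have memF: "\<sigma> v \<in> Fd n d" if "v \<in> Fd n d" for v
    using that i unfolding mem_Fd \<sigma>_def by auto
  have hs: "h (\<sigma> v) = h v" for v unfolding \<sigma>_def by (rule h)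
  have si: "\<sigma> v i = (\<not> v i)" for v by (simp add: \<sigma>_def)
  have img: "\<sigma> ` ?S1 = ?S2"
  proof (rule set_eqI, rule iffI)
    fix x assume "x \<in> \<sigma> ` ?S1"
    then obtain v where v: "v \<in> ?S1" "x = \<sigma> v" by blast
    show "x \<in> ?S2" using v memF[of v] hs[of v] si[of v] by auto
  next
    fix x assume x: "x \<in> ?S2"
    have "\<sigma> x \<in> ?S1" using x memF[of x] hs[of x] si[of x] by auto
    thus "x \<in> \<sigma> ` ?S1" by (rule image_eqI[rotated]) (simp only: inv)
  qed
  have "card ?S2 = card ?S1" using card_image[OF inj] img by simp
  moreover have "card ?S1 + card ?S2 = card (Fd n d)"
  proof -
    have u: "?S1 \<union> ?S2 = Fd n d" by blast
    have "card (?S1 \<union> ?S2) = card ?S1 + card ?S2"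
      by (rule card_Un_disjoint) (use finite_Fd[of n d] in auto)
    thus ?thesis using u by simp
  qed
  ultimately show ?thesis by (simp add: card_Fd)
qed

lemma ball_bound:
  fixes g :: "nat \<Rightarrow> bool"
  shows "real (card {u\<in>Fd n d. card {i\<in>{..<n}. g i \<noteq> u i} \<le> t}) * (1/2)^t \<le> (3/2)^n"
proof -
  let ?A = "{..<n}"
  define \<phi> where "\<phi> = (\<lambda>u::nat\<Rightarrow>bool. {i\<in>?A. g i \<noteq> u i})"
  let ?B = "{u\<in>Fd n d. card (\<phi> u) \<le> t}"
  let ?P = "{X\<in>Pow ?A. card X \<le> t}"
  have inj: "inj_on \<phi> ?B"
  proof (rule inj_onI)
    fix u v assume u: "u \<in> ?B" and v: "v \<in> ?B" and e: "\<phi> u = \<phi> v"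
    show "u = v"
    proof
      fix j show "u j = v j"
      proof (cases "j < n")
        case True
        have "(j \<in> \<phi> u) = (j \<in> \<phi> v)" using e by simp
        thus ?thesis using True by (auto simp: \<phi>_def)
      next
        case False thus ?thesis using u v by (auto simp: mem_Fd)
      qed
    qed
  qed
  have sub: "\<phi> ` ?B \<subseteq> ?P" by (auto simp: \<phi>_def)
  have "card ?B \<le> card ?P"
    using card_inj_on_le[OF inj sub] by simp
  hence "real (card ?B) * (1/2)^t \<le> real (card ?P) * (1/2)^t" by simp
  also have "\<dots> = (\<Sum>X\<in>?P. (1/2::real)^t)" by simp
  also have "\<dots> \<le> (\<Sum>X\<in>?P. (1/2::real)^card X)"
    by (intro sum_mono power_decreasing) auto
  also have "\<dots> \<le> (\<Sum>X\<in>Pow ?A. (1/2::real)^card X)"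
    by (intro sum_mono2) auto
  also have "\<dots> = (\<Prod>x\<in>?A. 1/2 + (1::real))"
    by (subst prod_add) auto
  also have "\<dots> = (3/2)^n" by simp
  finally show ?thesis by (simp add: \<phi>_def)
qed

definition gv :: "(bool list \<Rightarrow> bob_input \<Rightarrow> nat \<Rightarrow> bool) \<Rightarrow> (nat \<Rightarrow> bool) \<Rightarrow> (nat \<Rightarrow> bool) \<Rightarrow> bool list \<Rightarrow> nat \<Rightarrow> bool" where
  "gv f v w m i = (f m (v(i := w i)) i \<noteq> v i)"

definition dd :: "nat \<Rightarrow> (alice_input \<Rightarrow> bool list) \<Rightarrow> (bool list \<Rightarrow> bob_input \<Rightarrow> nat \<Rightarrow> bool) \<Rightarrow> (nat \<Rightarrow> bool) \<Rightarrow> (nat \<Rightarrow> bool) \<Rightarrow> (nat \<Rightarrow> bool) \<Rightarrow> nat" where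
  "dd n a f v w u = card {i\<in>{..<n}. gv f v w (a (Smask u v)) i \<noteq> u i}"

lemma geom_lt: "(\<Sum>i\<le>l. (2::nat)^i) < 2^(Suc l)"
  by (induction l) auto

lemma card_msgs: "real (card {xs::bool list. set xs \<subseteq> UNIV \<and> length xs \<le> l}) \<le> 2^(Suc l)"
proof -
  have "card {xs::bool list. set xs \<subseteq> UNIV \<and> length xs \<le> l} = (\<Sum>i\<le>l. 2^i)"
    by (subst card_lists_length_le) auto
  also have "\<dots> < 2^(Suc l)" by (rule geom_lt)
  finally have "card {xs::bool list. set xs \<subseteq> UNIV \<and> length xs \<le> l} < 2^(Suc l)" .
  then have "real (card {xs::bool list. set xs \<subseteq> UNIV \<and> length xs \<le> l}) < real ((2::nat)^Suc l)"
    by (simp only: of_nat_less_iff)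
  thus ?thesis by simp
qed

lemma core_vw:
  "real (\<Sum>u\<in>Fd n True. dd n a f v w u) \<ge>
     real (Suc t) * (2^n - real (card {u\<in>Fd n True. length (a (Smask u v)) > l}) - 2^(Suc l) * (2^t * (3/2)^n))"
proof -
  let ?F = "Fd n True"
  let ?M = "{xs::bool list. set xs \<subseteq> UNIV \<and> length xs \<le> l}"
  let ?Hi = "{u\<in>?F. dd n a f v w u > t}"
  let ?Lo = "{u\<in>?F. length (a (Smask u v)) > l}"
  let ?G = "{u\<in>?F. length (a (Smask u v)) \<le> l \<and> dd n a f v w u \<le> t}"
  let ?Ball = "\<lambda>m. {u\<in>?F. card {i\<in>{..<n}. gv f v w m i \<noteq> u i} \<le> t}"
  have finF: "finite ?F" by (rule finite_Fd)
  have "?G \<subseteq> (\<Union>m\<in>?M. ?Ball m)" by (auto simp: dd_def)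
  hence "card ?G \<le> card (\<Union>m\<in>?M. ?Ball m)"
    by (intro card_mono) (auto intro: finite_subset[OF _ finF])
  also have "\<dots> \<le> (\<Sum>m\<in>?M. card (?Ball m))"
    by (rule card_UN_le) (rule finite_lists_length_le, simp)
  finally have G1: "real (card ?G) \<le> (\<Sum>m\<in>?M. real (card (?Ball m)))"
    by (simp add: of_nat_sum[symmetric] del: of_nat_sum)
  have bb: "real (card (?Ball m)) \<le> 2^t * (3/2)^n" for m
  proof -
    have "real (card (?Ball m)) * (1/2)^t \<le> (3/2)^n" by (rule ball_bound)
    thus ?thesis by (simp add: field_simps power_divide)
  qed
  have "(\<Sum>m\<in>?M. real (card (?Ball m))) \<le> (\<Sum>m\<in>?M. 2^t * (3/2)^n)"
    by (intro sum_mono bb)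
  also have "\<dots> = real (card ?M) * (2^t * (3/2)^n)" by simp
  also have "\<dots> \<le> 2^(Suc l) * (2^t * (3/2)^n)"
    by (intro mult_right_mono card_msgs) auto
  finally have G2: "real (card ?G) \<le> 2^(Suc l) * (2^t * (3/2)^n)" using G1 by linarith
  have cover: "?F \<subseteq> ?Hi \<union> ?Lo \<union> ?G" by auto
  have "card ?F \<le> card (?Hi \<union> ?Lo \<union> ?G)"
    by (intro card_mono cover) (auto intro: finite_subset[OF _ finF])
  also have "\<dots> \<le> card ?Hi + card ?Lo + card ?G"
    by (meson card_Un_le add_le_mono order_trans le_refl)
  finally have C: "real (2^n) \<le> real (card ?Hi) + real (card ?Lo) + real (card ?G)"
    by (simp add: card_Fd of_nat_add[symmetric] del: of_nat_add)
  have "real (Suc t) * real (card ?Hi) = (\<Sum>u\<in>?Hi. real (Suc t))" by simp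
  also have "\<dots> \<le> (\<Sum>u\<in>?Hi. real (dd n a f v w u))" by (intro sum_mono) auto
  also have "\<dots> \<le> (\<Sum>u\<in>?F. real (dd n a f v w u))" by (intro sum_mono2 finF) auto
  finally have H: "real (Suc t) * real (card ?Hi) \<le> real (\<Sum>u\<in>?F. dd n a f v w u)" by simp
  have "real (card ?Hi) \<ge> 2^n - real (card ?Lo) - 2^(Suc l) * (2^t * (3/2)^n)" using C G2 by simp
  hence "real (Suc t) * (2^n - real (card ?Lo) - 2^(Suc l) * (2^t * (3/2)^n)) \<le> real (Suc t) * real (card ?Hi)"
    by (intro mult_left_mono) auto
  thus ?thesis using H by linarith
qed

lemma half_real: "c * 2 = (2::nat)^n \<Longrightarrow> real c = 2^n/2"
  by (drule arg_cong[where f=real]) simp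

lemma card_ui: "i < n \<Longrightarrow> card {u\<in>Fd n True. u i} * 2 = 2^n"
  using flip_count[of i n "\<lambda>_. True" True] by simp

lemma q1:
  assumes i: "i < n"
  shows "(\<Sum>u\<in>Fd n True. \<Sum>v\<in>Fd n False. \<Sum>w\<in>Fd n False.
            of_bool (u i \<and> f (a (Smask u v)) (v(i := w i)) i = v i) :: real) = 2^n * 2^n * 2^n / 4"
proof -
  have inner: "(\<Sum>v\<in>Fd n False. \<Sum>w\<in>Fd n False. of_bool (u i \<and> f (a (Smask u v)) (v(i := w i)) i = v i) :: real)
       = of_bool (u i) * (2^n * 2^n / 2)" for u
  proof (cases "u i")
    case False thus ?thesis by simp
  next
    case True
    have "(\<Sum>v\<in>Fd n False. \<Sum>w\<in>Fd n False. of_bool (u i \<and> f (a (Smask u v)) (v(i := w i)) i = v i) :: real)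
        = (\<Sum>w\<in>Fd n False. \<Sum>v\<in>Fd n False. of_bool (f (a (Smask u v)) (v(i := w i)) i = v i))"
      using True by (subst sum.swap) simp
    also have "\<dots> = (\<Sum>w\<in>Fd n False. 2^n / 2)"
    proof (rule sum.cong[OF refl])
      fix w
      let ?h = "\<lambda>v. f (a (Smask u v)) (v(i := w i)) i"
      have hinv: "?h (v(i:=b)) = ?h v" for v b
      proof -
        have "Smask u (v(i:=b)) = Smask u v" using True by (auto simp: Smask_def fun_eq_iff)
        moreover have "v(i:=b, i := w i) = v(i := w i)" by simp
        ultimately show ?thesis by simp
      qed
      have "card {v\<in>Fd n False. ?h v = v i} * 2 = 2^n" by (rule flip_count[OF i hinv])
      hence "real (card {v\<in>Fd n False. ?h v = v i}) = 2^n / 2"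
        by (rule half_real)
      thus "(\<Sum>v\<in>Fd n False. of_bool (?h v = v i) :: real) = 2^n / 2"
        by (simp add: finite_Fd Int_def)
    qed
    also have "\<dots> = of_bool (u i) * (2^n * 2^n / 2)" using True by (simp add: card_Fd)
    finally show ?thesis .
  qed
  have c: "real (card {u\<in>Fd n True. u i}) = 2^n / 2"
    using card_ui[OF i] by (rule half_real)
  have s1: "(\<Sum>u\<in>Fd n True. of_bool (u i) * (2^n * 2^n / 2) :: real)
      = (\<Sum>u\<in>Fd n True. of_bool (u i)) * (2^n * 2^n / 2)"
    by (rule sum_distrib_right[symmetric])
  have s2: "(\<Sum>u\<in>Fd n True. of_bool (u i) :: real) = real (card {u\<in>Fd n True. u i})"
    by (simp add: finite_Fd Int_def)
  have "(\<Sum>u\<in>Fd n True. \<Sum>v\<in>Fd n False. \<Sum>w\<in>Fd n False.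
            of_bool (u i \<and> f (a (Smask u v)) (v(i := w i)) i = v i) :: real)
      = (\<Sum>u\<in>Fd n True. of_bool (u i) * (2^n * 2^n / 2))" by (simp only: inner)
  also have "\<dots> = 2^n / 2 * (2^n * 2^n / 2)" unfolding s1 s2 c ..
  finally show ?thesis by simp
qed

definition Wr :: "(alice_input \<Rightarrow> bool list) \<Rightarrow> (bool list \<Rightarrow> bob_input \<Rightarrow> nat \<Rightarrow> bool) \<Rightarrow> nat \<Rightarrow> (nat \<Rightarrow> bool) \<Rightarrow> (nat \<Rightarrow> bool) \<Rightarrow> (nat \<Rightarrow> bool) \<Rightarrow> real" where
  "Wr a f i u v w = of_bool (\<not> u i \<and> f (a (Smask u v)) (v(i := w i)) i \<noteq> v i)"

lemma swap4:
  "(\<Sum>u\<in>U. \<Sum>v\<in>V. \<Sum>w\<in>W. \<Sum>i\<in>I. g i u v w) = (\<Sum>i\<in>I. \<Sum>u\<in>U. \<Sum>v\<in>V. \<Sum>w\<in>W. (g i u v w :: real))"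
proof -
  have "(\<Sum>u\<in>U. \<Sum>v\<in>V. \<Sum>w\<in>W. \<Sum>i\<in>I. g i u v w) = (\<Sum>u\<in>U. \<Sum>v\<in>V. \<Sum>i\<in>I. \<Sum>w\<in>W. g i u v w)"
    by (rule sum.cong[OF refl], rule sum.cong[OF refl], rule sum.swap)
  also have "\<dots> = (\<Sum>u\<in>U. \<Sum>i\<in>I. \<Sum>v\<in>V. \<Sum>w\<in>W. g i u v w)"
    by (rule sum.cong[OF refl], rule sum.swap)
  also have "\<dots> = (\<Sum>i\<in>I. \<Sum>u\<in>U. \<Sum>v\<in>V. \<Sum>w\<in>W. g i u v w)"
    by (rule sum.swap)
  finally show ?thesis .
qed

lemma dd_sum: "real (dd n a f v w u) =
   (\<Sum>i<n. of_bool (u i \<and> f (a (Smask u v)) (v(i := w i)) i = v i) + Wr a f i u v w)"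
proof -
  have "real (dd n a f v w u) = (\<Sum>i<n. of_bool (gv f v w (a (Smask u v)) i \<noteq> u i))"
    by (simp add: dd_def Int_def)
  also have "\<dots> = (\<Sum>i<n. of_bool (u i \<and> f (a (Smask u v)) (v(i := w i)) i = v i) + Wr a f i u v w)"
    by (rule sum.cong[OF refl]) (auto simp: gv_def Wr_def)
  finally show ?thesis .
qed

lemma dsum:
  "(\<Sum>u\<in>Fd n True. \<Sum>v\<in>Fd n False. \<Sum>w\<in>Fd n False. real (dd n a f v w u)) =
   (\<Sum>i<n. \<Sum>u\<in>Fd n True. \<Sum>v\<in>Fd n False. \<Sum>w\<in>Fd n False. Wr a f i u v w) + real n * 2^n * 2^n * 2^n / 4"
proof -
  have "(\<Sum>u\<in>Fd n True. \<Sum>v\<in>Fd n False. \<Sum>w\<in>Fd n False. real (dd n a f v w u)) =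
     (\<Sum>i<n. \<Sum>u\<in>Fd n True. \<Sum>v\<in>Fd n False. \<Sum>w\<in>Fd n False.
        of_bool (u i \<and> f (a (Smask u v)) (v(i := w i)) i = v i) + Wr a f i u v w)"
    unfolding dd_sum by (rule swap4)
  also have "\<dots> = (\<Sum>i<n. (\<Sum>u\<in>Fd n True. \<Sum>v\<in>Fd n False. \<Sum>w\<in>Fd n False.
        of_bool (u i \<and> f (a (Smask u v)) (v(i := w i)) i = v i)) +
        (\<Sum>u\<in>Fd n True. \<Sum>v\<in>Fd n False. \<Sum>w\<in>Fd n False. Wr a f i u v w))"
    by (simp only: sum.distrib)
  also have "\<dots> = (\<Sum>i<n. 2^n * 2^n * 2^n / 4 +
        (\<Sum>u\<in>Fd n True. \<Sum>v\<in>Fd n False. \<Sum>w\<in>Fd n False. Wr a f i u v w))"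
    by (rule sum.cong[OF refl]) (simp only: q1 lessThan_iff)
  also have "\<dots> = (\<Sum>i<n. \<Sum>u\<in>Fd n True. \<Sum>v\<in>Fd n False. \<Sum>w\<in>Fd n False. Wr a f i u v w) + real n * 2^n * 2^n * 2^n / 4"
    by (simp add: sum.distrib)
  finally show ?thesis .
qed

lemma lo_bound: "real (card {u\<in>Fd n True. length (a (Smask u v)) > l}) \<le>
    (\<Sum>u\<in>Fd n True. real (length (a (Smask u v)))) / real (Suc l)"
proof -
  have "real (card {u\<in>Fd n True. length (a (Smask u v)) > l}) = (\<Sum>u\<in>Fd n True. of_bool (length (a (Smask u v)) > l))"
    by (simp add: finite_Fd Int_def)
  also have "\<dots> \<le> (\<Sum>u\<in>Fd n True. real (length (a (Smask u v))) / real (Suc l))"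
  proof (rule sum_mono)
    fix u show "(of_bool (length (a (Smask u v)) > l) :: real) \<le> real (length (a (Smask u v))) / real (Suc l)"
      by (cases "length (a (Smask u v)) > l") (auto simp: field_simps)
  qed
  also have "\<dots> = (\<Sum>u\<in>Fd n True. real (length (a (Smask u v)))) / real (Suc l)"
    by (simp add: sum_divide_distrib)
  finally show ?thesis .
qed

lemma core_all:
  "(\<Sum>i<n. \<Sum>u\<in>Fd n True. \<Sum>v\<in>Fd n False. \<Sum>w\<in>Fd n False. Wr a f i u v w) + real n * 2^n * 2^n * 2^n / 4 \<ge>
   real (Suc t) * (2^n * 2^n * 2^n - 2^n * (\<Sum>u\<in>Fd n True. \<Sum>v\<in>Fd n False. real (length (a (Smask u v)))) / real (Suc l)
      - 2^n * 2^n * (2^(Suc l) * (2^t * (3/2)^n)))"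
proof -
  let ?K = "2^(Suc l) * (2^t * (3/2)^n) :: real"
  let ?L = "\<lambda>v. (\<Sum>u\<in>Fd n True. real (length (a (Smask u v))))"
  have "(\<Sum>i<n. \<Sum>u\<in>Fd n True. \<Sum>v\<in>Fd n False. \<Sum>w\<in>Fd n False. Wr a f i u v w) + real n * 2^n * 2^n * 2^n / 4
      = (\<Sum>u\<in>Fd n True. \<Sum>v\<in>Fd n False. \<Sum>w\<in>Fd n False. real (dd n a f v w u))"
    by (rule dsum[symmetric])
  also have "\<dots> = (\<Sum>v\<in>Fd n False. \<Sum>w\<in>Fd n False. \<Sum>u\<in>Fd n True. real (dd n a f v w u))"
    by (subst sum.swap, rule sum.cong[OF refl], rule sum.swap)
  also have "\<dots> \<ge> (\<Sum>v\<in>Fd n False. \<Sum>w\<in>Fd n False. real (Suc t) * (2^n - ?L v / real (Suc l) - ?K))"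
  proof (intro sum_mono)
    fix v w
    have "real (Suc t) * (2^n - ?L v / real (Suc l) - ?K) \<le>
          real (Suc t) * (2^n - real (card {u\<in>Fd n True. length (a (Smask u v)) > l}) - ?K)"
      by (intro mult_left_mono diff_right_mono diff_left_mono lo_bound) auto
    also have "\<dots> \<le> real (\<Sum>u\<in>Fd n True. dd n a f v w u)" by (rule core_vw)
    finally show "real (Suc t) * (2^n - ?L v / real (Suc l) - ?K) \<le> (\<Sum>u\<in>Fd n True. real (dd n a f v w u))"
      by simp
  qed
  also have "(\<Sum>v\<in>Fd n False. \<Sum>w\<in>Fd n False. real (Suc t) * (2^n - ?L v / real (Suc l) - ?K))
     = real (Suc t) * (2^n * 2^n * 2^n - 2^n * (\<Sum>v\<in>Fd n False. ?L v) / real (Suc l) - 2^n * 2^n * ?K)"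
  proof -
    let ?c = "real (Suc t)" and ?s = "real (Suc l)" and ?N = "2^n :: real"
    have "(\<Sum>v\<in>Fd n False. \<Sum>w\<in>Fd n False. ?c * (2^n - ?L v / ?s - ?K))
       = (\<Sum>v\<in>Fd n False. ?N * ?c * (?N - ?K) - (?N * ?c / ?s) * ?L v)"
      by (rule sum.cong[OF refl]) (simp add: card_Fd algebra_simps)
    also have "\<dots> = ?N * (?N * ?c * (?N - ?K)) - (?N * ?c / ?s) * (\<Sum>v\<in>Fd n False. ?L v)"
      by (simp add: sum_subtractf sum_distrib_left[symmetric] sum_divide_distrib[symmetric] card_Fd)
    also have "\<dots> = ?c * (?N * ?N * ?N - ?N * (\<Sum>v\<in>Fd n False. ?L v) / ?s - ?N * ?N * ?K)"
      by (simp add: algebra_simps)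
    finally show ?thesis .
  qed
  also have "(\<Sum>v\<in>Fd n False. ?L v) = (\<Sum>u\<in>Fd n True. \<Sum>v\<in>Fd n False. real (length (a (Smask u v))))"
    by (rule sum.swap)
  finally show ?thesis .
qed

definition errS :: "nat \<Rightarrow> (alice_input \<Rightarrow> bool list) \<Rightarrow> (bool list \<Rightarrow> bob_input \<Rightarrow> nat \<Rightarrow> bool) \<Rightarrow> real" where
  "errS n a f = (\<Sum>i<n. \<Sum>u\<in>Fd n True. \<Sum>v\<in>Fd n False. \<Sum>w\<in>Fd n False. Wr a f i u v w) / (real n * 2^n * 2^n * 2^n)"
definition costS :: "nat \<Rightarrow> (alice_input \<Rightarrow> bool list) \<Rightarrow> real" where
  "costS n a = (\<Sum>u\<in>Fd n True. \<Sum>v\<in>Fd n False. real (length (a (Smask u v)))) / (2^n * 2^n)"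
definition eta :: "nat \<Rightarrow> nat \<Rightarrow> nat \<Rightarrow> real" where
  "eta n l t = 2^(Suc l) * (2^t * (3/2)^n) / 2^n"

lemma errS_nonneg: "errS n a f \<ge> 0"
  unfolding errS_def Wr_def by (intro divide_nonneg_nonneg sum_nonneg) auto

lemma alg1: "(n::real) > 0 \<Longrightarrow> s > 0 \<Longrightarrow> N > 0 \<Longrightarrow>
  c * (N * N * N - N * (Cs * (N * N)) / s - N * N * (e * N)) = (n * N * N * N) * (c / n * (1 - Cs / s - e))"
  by (simp add: field_simps)

lemma per_r:
  assumes n: "n > 0" and t: "real (Suc t) \<ge> 3/8 * n"
  shows "errS n a f + 1/4 \<ge> 3/8 * (1 - costS n a / real (Suc l) - eta n l t)"
proof -
  let ?N = "2^n :: real"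
  let ?X = "(\<Sum>i<n. \<Sum>u\<in>Fd n True. \<Sum>v\<in>Fd n False. \<Sum>w\<in>Fd n False. Wr a f i u v w)"
  let ?C = "(\<Sum>u\<in>Fd n True. \<Sum>v\<in>Fd n False. real (length (a (Smask u v))))"
  let ?B = "1 - costS n a / real (Suc l) - eta n l t"
  have pos: "real n * ?N * ?N * ?N > 0" using n by simp
  have X: "?X = errS n a f * (real n * ?N * ?N * ?N)" unfolding errS_def using pos by simp
  have C: "?C = costS n a * (?N * ?N)" unfolding costS_def by simp
  have K: "2^(Suc l) * (2^t * (3/2)^n) = eta n l t * ?N" unfolding eta_def by simp
  have "?X + real n * ?N * ?N * ?N / 4 \<ge>
     real (Suc t) * (?N * ?N * ?N - ?N * ?C / real (Suc l) - ?N * ?N * (2^(Suc l) * (2^t * (3/2)^n)))"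
    by (rule core_all)
  also have "real (Suc t) * (?N * ?N * ?N - ?N * ?C / real (Suc l) - ?N * ?N * (2^(Suc l) * (2^t * (3/2)^n)))
     = (real n * ?N * ?N * ?N) * (real (Suc t) / real n * ?B)"
    unfolding C K using n by (intro alg1) auto
  also have "?X + real n * ?N * ?N * ?N / 4 = (real n * ?N * ?N * ?N) * (errS n a f + 1/4)"
    unfolding X by (simp add: field_simps)
  finally have main0: "(real n * ?N * ?N * ?N) * (real (Suc t) / real n * ?B) \<le> (real n * ?N * ?N * ?N) * (errS n a f + 1/4)" .
  have main: "errS n a f + 1/4 \<ge> real (Suc t) / real n * ?B"
    by (rule mult_left_le_imp_le[OF main0 pos])
  show ?thesis
  proof (cases "?B \<ge> 0")
    case True
    have "3/8 \<le> real (Suc t) / real n" using t n by (simp add: field_simps)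
    hence "3/8 * ?B \<le> real (Suc t) / real n * ?B" using True by (intro mult_right_mono) auto
    thus ?thesis using main by linarith
  next
    case False
    hence "3/8 * ?B < 0" by (intro mult_pos_neg) auto
    thus ?thesis using errS_nonneg[of n a f] by linarith
  qed
qed

lemma sum_Omega:
  "(\<Sum>x\<in>A\<times>B\<times>C\<times>D. g x) = (\<Sum>i\<in>A. \<Sum>u\<in>B. \<Sum>v\<in>C. \<Sum>w\<in>D. (g (i,u,v,w) :: real))"
  by (simp add: sum.cartesian_product)

lemma card_Omega: "card (Omega n) = n * 2^n * 2^n * 2^n"
  by (simp add: Omega_def card_cartesian_product FT_Fd FF_Fd card_Fd)

lemma Omega_fin: "finite (Omega n)"
  by (simp add: Omega_def FT_Fd FF_Fd finite_Fd)

lemma Omega_ne: "n > 0 \<Longrightarrow> Omega n \<noteq> {}"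
  using card_Omega[of n] by (auto simp del: card_Omega)

lemma nn_D:
  assumes n: "n > 0" and g: "\<And>x. g x \<ge> 0"
  shows "(\<integral>\<^sup>+y. ennreal (g y) \<partial>D_overwrite n) = ennreal ((\<Sum>x\<in>Omega n. g (Phi x)) / real (card (Omega n)))"
proof -
  have "(\<integral>\<^sup>+y. ennreal (g y) \<partial>D_overwrite n) = (\<Sum>x\<in>Omega n. ennreal (g (Phi x))) / of_nat (card (Omega n))"
    unfolding D_eq[OF n] nn_integral_map_pmf
    by (rule nn_integral_pmf_of_set[OF Omega_ne[OF n] Omega_fin])
  also have "\<dots> = ennreal (\<Sum>x\<in>Omega n. g (Phi x)) / ennreal (real (card (Omega n)))"
    using g by (simp add: ennreal_of_nat_eq_real_of_nat)
  also have "\<dots> = ennreal ((\<Sum>x\<in>Omega n. g (Phi x)) / real (card (Omega n)))"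
    using g n Omega_ne[OF n] Omega_fin by (intro divide_ennreal sum_nonneg) (auto simp: card_gt_0_iff)
  finally show ?thesis .
qed

lemma err_inner:
  assumes n: "n > 0"
  shows "(\<integral>\<^sup>+y. indicator {(r, xa, xb, i). \<not> ow_correct xa i (bob r (alice r xa) xb i)} (r, y) \<partial>D_overwrite n)
     = ennreal (errS n (alice r) (bob r))"
proof -
  define g where "g = (\<lambda>(xa, xb, i). if \<not> ow_correct xa i (bob r (alice r xa) xb i) then 1 else (0::real))"
  have ind: "indicator {(r, xa, xb, i). \<not> ow_correct xa i (bob r (alice r xa) xb i)} (r, y) = ennreal (g y)" for y
    by (cases y) (auto simp: g_def indicator_def)
  have gW: "g (Phi (i,u,v,w)) = Wr (alice r) (bob r) i u v w" for i u v w
    by (auto simp: g_def Phi_def Wr_def ow_correct_def Smask_def)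
  show ?thesis
    unfolding ind
    apply (subst nn_D[OF n])
     apply (simp add: g_def split: prod.splits)
    apply (simp add: errS_def Omega_def sum_Omega gW card_cartesian_product card_Fd FT_Fd FF_Fd mult.assoc)
    done
qed

lemma cost_inner:
  assumes n: "n > 0"
  shows "(\<integral>\<^sup>+y. ennreal (real (length (alice r (fst y)))) \<partial>D_overwrite n)
     = ennreal (costS n (alice r))"
proof -
  have "(\<Sum>x\<in>Omega n. real (length (alice r (fst (Phi x))))) =
        (\<Sum>i<n. \<Sum>u\<in>Fd n True. \<Sum>v\<in>Fd n False. \<Sum>w\<in>Fd n False. real (length (alice r (Smask u v))))"
    by (simp add: Omega_def sum_Omega Phi_def FT_Fd FF_Fd)
  also have "\<dots> = real n * 2^n * (\<Sum>u\<in>Fd n True. \<Sum>v\<in>Fd n False. real (length (alice r (Smask u v))))"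
    by (simp add: card_Fd sum_distrib_left mult.assoc)
  finally have e: "(\<Sum>x\<in>Omega n. real (length (alice r (fst (Phi x))))) = \<dots>" .
  show ?thesis
    apply (subst nn_D[OF n])
     apply simp
    apply (simp only: e card_Omega costS_def)
    using n apply (simp add: field_simps)
    done
qed

lemma error_int:
  assumes n: "n > 0"
  shows "ennreal (ow_error n R alice bob) = (\<integral>\<^sup>+r. ennreal (errS n (alice r) (bob r)) \<partial>R)"
proof -
  let ?E = "{(r, xa, xb, i). \<not> ow_correct xa i (bob r (alice r xa) xb i)}"
  have "ennreal (ow_error n R alice bob) = emeasure (pair_pmf R (D_overwrite n)) ?E"
    unfolding ow_error_def by (simp add: measure_pmf.emeasure_eq_measure)
  also have "\<dots> = (\<integral>\<^sup>+x. indicator ?E x \<partial>pair_pmf R (D_overwrite n))"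
    by (rule nn_integral_indicator[symmetric]) simp
  also have "\<dots> = (\<integral>\<^sup>+r. \<integral>\<^sup>+y. indicator ?E (r, y) \<partial>D_overwrite n \<partial>R)"
    by (rule nn_integral_pair_pmf')
  also have "\<dots> = (\<integral>\<^sup>+r. ennreal (errS n (alice r) (bob r)) \<partial>R)"
    by (simp only: err_inner[OF n])
  finally show ?thesis .
qed

lemma cost_int:
  assumes n: "n > 0"
  shows "ow_cost n R alice = (\<integral>\<^sup>+r. ennreal (costS n (alice r)) \<partial>R)"
proof -
  have "ow_cost n R alice = (\<integral>\<^sup>+r. \<integral>\<^sup>+y. ennreal (real (length (alice r (fst y)))) \<partial>D_overwrite n \<partial>R)"
    unfolding ow_cost_def by (subst nn_integral_pair_pmf') simp
  also have "\<dots> = (\<integral>\<^sup>+r. ennreal (costS n (alice r)) \<partial>R)"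
    by (simp only: cost_inner[OF n])
  finally show ?thesis .
qed

lemma q_lt1: "2 powr (25/64) * (3/4) < (1::real)"
proof -
  have p: "(2 powr (25/64) :: real)^64 = 2^25"
  proof -
    have "(2 powr (25/64) :: real)^64 = (2 powr (25/64)) powr (real 64)"
      by (rule powr_realpow[symmetric]) simp
    also have "\<dots> = 2 powr (real 25)" by (simp add: powr_powr)
    also have "\<dots> = 2^25" by (rule powr_realpow) simp
    finally show ?thesis .
  qed
  show ?thesis
  proof (rule ccontr)
    assume "\<not> ?thesis"
    hence "4/3 \<le> (2 powr (25/64) :: real)" by simp
    hence "(4/3::real)^64 \<le> (2 powr (25/64))^64" by (intro power_mono) auto
    thus False unfolding p by (simp add: power_divide)
  qed
qed

lemma eta_bound:
  "eta n (n div 64) (3*n div 8) \<le> 2 * (2 powr (25/64) * (3/4))^n"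
proof -
  let ?l = "n div 64" and ?t = "3*n div 8"
  have lt: "real (?l + ?t) \<le> 25/64 * real n"
  proof -
    have "real ?l \<le> real n / 64" using of_nat_div_le_of_nat[of n 64] by simp
    moreover have "real ?t \<le> real (3*n) / 8" using of_nat_div_le_of_nat[of "3*n" 8] by simp
    ultimately show ?thesis by simp
  qed
  have "(2::real)^(?l + ?t) = 2 powr real (?l + ?t)" by (rule powr_realpow[symmetric]) simp
  also have "\<dots> \<le> 2 powr (25/64 * real n)" by (rule powr_mono[OF lt]) simp
  also have "\<dots> = (2 powr (25/64)) powr (real n)" by (simp add: powr_powr)
  also have "\<dots> = (2 powr (25/64))^n" by (rule powr_realpow) simp
  finally have pw: "(2::real)^(?l + ?t) \<le> (2 powr (25/64))^n" .
  have "eta n ?l ?t = 2 * 2^(?l + ?t) * (3/4)^n"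
  proof -
    have "(4::real)^n = 2^n * 2^n" by (metis power_mult_distrib numeral_times_numeral semiring_norm(12) num_double)
    thus ?thesis by (simp add: eta_def power_add power_divide field_simps)
  qed
  also have "\<dots> \<le> 2 * (2 powr (25/64))^n * (3/4)^n"
    using pw by (intro mult_right_mono mult_left_mono) auto
  also have "\<dots> = 2 * (2 powr (25/64) * (3/4))^n" by (simp only: power_mult_distrib mult.assoc)
  finally show ?thesis .
qed

lemma eventually_eta: "\<exists>N. \<forall>n\<ge>N. n > 0 \<and> eta n (n div 64) (3*n div 8) \<le> 1/100"
proof -
  let ?q = "2 powr (25/64) * (3/4) :: real"
  obtain N where N: "?q^N < 1/200" using real_arch_pow_inv[OF _ q_lt1, of "1/200"] by auto
  show ?thesis
  proof (intro exI[of _ "Suc N"] allI impI conjI)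
    fix n assume n: "Suc N \<le> n"
    thus "n > 0" by simp
    have "?q^n \<le> ?q^N" using n q_lt1 by (intro power_decreasing) auto
    hence "2 * ?q^n \<le> 1/100" using N by simp
    thus "eta n (n div 64) (3*n div 8) \<le> 1/100" using eta_bound[of n] by linarith
  qed
qed

lemma lin_aux: "X \<le> Y \<Longrightarrow> e + 1/4 \<ge> 3/8*(1 - X - h) \<Longrightarrow> h \<le> 1/100 \<Longrightarrow> 97/800 \<le> e + 3/8*(Y::real)"
proof -
  assume a: "X \<le> Y" "e + 1/4 \<ge> 3/8*(1 - X - h)" "h \<le> 1/100"
  have "3/8*(1 - X - h) = 3/8 - 3/8*X - 3/8*h" by (simp add: right_diff_distrib)
  with a show ?thesis by linarith
qed

lemma per_r2:
  assumes n: "n > 0" and eta: "eta n (n div 64) (3*n div 8) \<le> 1/100"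
  shows "97/800 \<le> errS n a f + 24 / real n * costS n a"
proof -
  let ?l = "n div 64" and ?t = "3*n div 8"
  have t: "real (Suc ?t) \<ge> 3/8 * n"
  proof -
    have "3*n < 8 * Suc ?t" by simp
    hence "real (3*n) < real (8 * Suc ?t)" by (simp only: of_nat_less_iff)
    thus ?thesis by simp
  qed
  have l: "real n / 64 \<le> real (Suc ?l)"
  proof -
    have "n < 64 * Suc ?l" by simp
    hence "real n < real (64 * Suc ?l)" by (simp only: of_nat_less_iff)
    thus ?thesis by simp
  qed
  have cs: "costS n a \<ge> 0" unfolding costS_def by (intro divide_nonneg_nonneg sum_nonneg) auto
  have P: "errS n a f + 1/4 \<ge> 3/8 * (1 - costS n a / real (Suc ?l) - eta n ?l ?t)"
    by (rule per_r[OF n t])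
  have "costS n a / real (Suc ?l) \<le> costS n a / (real n / 64)"
    using n l cs by (intro divide_left_mono) auto
  also have "\<dots> = 64 / real n * costS n a" by simp
  finally have Xle: "costS n a / real (Suc ?l) \<le> 64 / real n * costS n a" .
  have e: "24 / real n * costS n a = 3/8 * (64 / real n * costS n a)" by simp
  show ?thesis unfolding e by (rule lin_aux[OF Xle P eta])
qed

theorem mainTheorem17:
  fixes \<delta> :: real
  assumes "0 < \<delta>" and "\<delta> < 1/10"
  shows "\<exists>c>0. \<exists>N. \<forall>n\<ge>N. \<forall>(R :: nat pmf) alice bob.
           ow_error n R alice bob \<le> \<delta> \<longrightarrow> ow_cost n R alice \<ge> ennreal (c * real n)"
proof -
  obtain N where N: "\<And>n. n \<ge> N \<Longrightarrow> n > 0 \<and> eta n (n div 64) (3*n div 8) \<le> 1/100"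
    using eventually_eta by blast
  show ?thesis
  proof (intro exI[of _ "1/6400"] conjI exI[of _ N] allI impI)
    show "(0::real) < 1/6400" by simp
    fix n R alice bob
    assume nN: "n \<ge> N" and err: "ow_error n R alice bob \<le> \<delta>"
    have n: "n > 0" and eta: "eta n (n div 64) (3*n div 8) \<le> 1/100" using N[OF nN] by auto
    show "ow_cost n R alice \<ge> ennreal (1/6400 * real n)"
    proof (rule ccontr)
      assume "\<not> ?thesis"
      hence less: "ow_cost n R alice < ennreal (1/6400 * real n)" by simp
      let ?k = "ennreal (24 / real n)"
      have pt: "ennreal (97/800) \<le> ennreal (errS n (alice r) (bob r)) + ?k * ennreal (costS n (alice r))" for r
      proof -
        have cs: "costS n (alice r) \<ge> 0" unfolding costS_def by (intro divide_nonneg_nonneg sum_nonneg) auto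
        have "ennreal (97/800) \<le> ennreal (errS n (alice r) (bob r) + 24 / real n * costS n (alice r))"
          by (rule ennreal_leI[OF per_r2[OF n eta]])
        also have "\<dots> = ennreal (errS n (alice r) (bob r)) + ?k * ennreal (costS n (alice r))"
        proof -
          have m: "ennreal (24 / real n * costS n (alice r)) = ?k * ennreal (costS n (alice r))"
            using cs by (intro ennreal_mult) auto
          show ?thesis
            using cs errS_nonneg[of n "alice r" "bob r"] unfolding m[symmetric]
            by (intro ennreal_plus) auto
        qed
        finally show ?thesis .
      qed
      have "ennreal (97/800) = (\<integral>\<^sup>+r. ennreal (97/800) \<partial>R)"
        by (simp add: measure_pmf.emeasure_space_1)
      also have "\<dots> \<le> (\<integral>\<^sup>+r. ennreal (errS n (alice r) (bob r)) + ?k * ennreal (costS n (alice r)) \<partial>R)"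
        by (intro nn_integral_mono pt)
      also have "\<dots> = (\<integral>\<^sup>+r. ennreal (errS n (alice r) (bob r)) \<partial>R) + ?k * (\<integral>\<^sup>+r. ennreal (costS n (alice r)) \<partial>R)"
      proof -
        have "(\<integral>\<^sup>+r. ennreal (errS n (alice r) (bob r)) + ?k * ennreal (costS n (alice r)) \<partial>R)
           = (\<integral>\<^sup>+r. ennreal (errS n (alice r) (bob r)) \<partial>R) + (\<integral>\<^sup>+r. ?k * ennreal (costS n (alice r)) \<partial>R)"
          by (rule nn_integral_add) auto
        moreover have "(\<integral>\<^sup>+r. ?k * ennreal (costS n (alice r)) \<partial>R) = ?k * (\<integral>\<^sup>+r. ennreal (costS n (alice r)) \<partial>R)"
          by (rule nn_integral_cmult) auto
        ultimately show ?thesis by simp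
      qed
      also have "\<dots> = ennreal (ow_error n R alice bob) + ?k * ow_cost n R alice"
        by (simp only: error_int[OF n] cost_int[OF n])
      also have "\<dots> \<le> ennreal \<delta> + ?k * ennreal (1/6400 * real n)"
        using err less by (intro add_mono mult_left_mono ennreal_leI) auto
      also have "\<dots> = ennreal (\<delta> + 3/800)"
      proof -
        have "?k * ennreal (1/6400 * real n) = ennreal (24 / real n * (1/6400 * real n))"
          by (rule ennreal_mult[symmetric]) auto
        also have "24 / real n * (1/6400 * real n) = 3/800" using n by simp
        finally show ?thesis using assms(1) by (simp only: ennreal_plus[symmetric])
      qed
      finally have "97/800 \<le> \<delta> + 3/800"
        using assms(1) by (subst (asm) ennreal_le_iff) auto
      thus False using assms(2) by simp
    qed
  qed
qed

end
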